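(* Let $X$ be a scalar random variable with distribution $\pi$ and upper bound $\ell\in\mathbb{R}$ such that $\mathbb{P}_\pi[X\le\ell]=1$. Let $\alpha\in(0,1]$, $\epsilon\in[0,1]$, and define \[ L(x,\mu,t) = t\left(\mu + \frac{1}{\alpha}\max\left\{\frac{x}{t}-\mu,0\right\}\right),\qquad u_b(\mu,t)=L(\ell,\mu,t). \] For $N$ independent samples $x_1,\dots,x_N$ of $X$, let $\zeta^*_N(\mu,t)=\max_{1\le k\le N}L(x_k,\mu,t)$. Then \[ \mathbb{P}^N_{\pi}\left[\mathrm{CVaR}_\alpha(X)\le \inf_{\mu\in\mathbb{R},\ t>0}\zeta^*_N(\mu,t)(1-\epsilon)+u_b(\mu,t)\epsilon\right]\ge 1-(1-\epsilon)^N. \]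
   Context: The Conditional-Value-at-Risk at level $\alpha\in(0,1]$ is $\mathrm{CVaR}_\alpha(X)=\inf_{z\in\mathbb{R}}\ z+\frac{\mathbb{E}_\pi[\max(X-z,0)]}{\alpha}$ (equivalently $\mathbb{E}_\pi[X\mid X\ge \mathrm{VaR}_\alpha(X)]$, where $\mathrm{VaR}_\alpha(X)=\inf\{\zeta : \mathbb{P}_\pi[X\le\zeta]\ge 1-\alpha\}$). $\zeta^*_N(\mu,t)$ is the solution of $\min_\zeta\zeta$ subject to $\zeta\ge L(x_i,\mu,t)$ for all $i$. $\mathbb{P}^N_\pi$ is the $N$-fold product measure governing the i.i.d. sample. *)

theory Defs
  imports "HOL-Probability.Probability"
begin

text \<open>Conditional Value-at-Risk of the (real-valued) random variable whose
  distribution is the probability measure pi on the reals (X = identity),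
  in the Rockafellar--Uryasev form inf_z z + E[max(X - z, 0)] / alpha.
  Taken in the extended reals, since the infimum may be minus infinity.\<close>
definition CVaR :: "real \<Rightarrow> real measure \<Rightarrow> ereal" where
  "CVaR \<alpha> \<pi> = (INF z \<in> (UNIV::real set).
       ereal (z + (\<integral>x. max (x - z) 0 \<partial>\<pi>) / \<alpha>))"

definition Lfun :: "real \<Rightarrow> real \<Rightarrow> real \<Rightarrow> real \<Rightarrow> real" where
  "Lfun \<alpha> x \<mu> t = t * (\<mu> + (1 / \<alpha>) * max (x / t - \<mu>) 0)"

definition zeta_star :: "real \<Rightarrow> nat \<Rightarrow> (nat \<Rightarrow> real) \<Rightarrow> real \<Rightarrow> real \<Rightarrow> real" where
  "zeta_star \<alpha> N xs \<mu> t = Max ((\<lambda>k. Lfun \<alpha> (xs k) \<mu> t) ` {..<N})"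

end

theory Submission imports Defs begin

lemma Lfun_alt:
  assumes "t > 0" "\<alpha> > 0"
  shows "Lfun \<alpha> x \<mu> t = t*\<mu> + max (x - t*\<mu>) 0 / \<alpha>"
proof -
  have "t * max (x / t - \<mu>) 0 = max (x - t*\<mu>) 0"
    using assms by (simp add: max_def field_simps)
  then show ?thesis unfolding Lfun_def using assms by (simp add: field_simps)
qed

lemma Lfun_mono:
  assumes "t > 0" "\<alpha> > 0" "x \<le> y"
  shows "Lfun \<alpha> x \<mu> t \<le> Lfun \<alpha> y \<mu> t"
  using assms by (simp add: Lfun_alt divide_right_mono)

lemma zeta_Max:
  assumes "t > 0" "\<alpha> > 0" "N > 0"
  shows "zeta_star \<alpha> N xs \<mu> t = Lfun \<alpha> (Max (xs ` {..<N})) \<mu> t"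
proof -
  have "mono (\<lambda>x. Lfun \<alpha> x \<mu> t)" using assms by (auto intro!: monoI Lfun_mono)
  then have "Lfun \<alpha> (Max (xs ` {..<N})) \<mu> t = Max ((\<lambda>x. Lfun \<alpha> x \<mu> t) ` (xs ` {..<N}))"
    using assms by (intro mono_Max_commute) auto
  then show ?thesis unfolding zeta_star_def by (simp add: image_image)
qed

lemma int_bound:
  fixes \<pi> :: "real measure"
  assumes rd: "real_distribution \<pi>" and AEl: "AE x in \<pi>. x \<le> l"
    and pm: "measure \<pi> {m<..} \<le> \<epsilon>" and "0 \<le> \<epsilon>" "\<epsilon> \<le> 1"
  shows "(\<integral>x. max (x - z) 0 \<partial>\<pi>) \<le> (1-\<epsilon>) * max (m - z) 0 + \<epsilon> * max (l - z) 0"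
proof -
  interpret real_distribution \<pi> by fact
  define M where "M = max (m - z) 0"
  define B where "B = max (l - z) 0"
  show ?thesis
  proof (cases "B \<le> M")
    case True
    have "(\<integral>x. max (x - z) 0 \<partial>\<pi>) \<le> (\<integral>x. B \<partial>\<pi>)"
      by (rule integral_mono_AE') (use AEl in \<open>auto simp: B_def elim!: eventually_mono\<close>)
    also have "\<dots> = B" using prob_space by simp
    also have "\<dots> \<le> (1-\<epsilon>) * M + \<epsilon> * B"
    proof -
      have "(1-\<epsilon>)*B \<le> (1-\<epsilon>)*M" using True assms(5) by (intro mult_left_mono) auto
      then show ?thesis by (simp add: algebra_simps)
    qed
    finally show ?thesis by (simp add: M_def B_def)
  next
    case False
    have "(\<integral>x. max (x - z) 0 \<partial>\<pi>) \<le> (\<integral>x. M + (B - M) * indicator {m<..} x \<partial>\<pi>)"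
    proof (rule integral_mono_AE')
      show "integrable \<pi> (\<lambda>x. M + (B - M) * indicator {m<..} x)"
        by (intro Bochner_Integration.integrable_add integrable_mult_right)
           (auto simp: integrable_indicator_iff less_top[symmetric])
      show "AE x in \<pi>. max (x - z) 0 \<le> M + (B - M) * indicator {m<..} x"
        using AEl False by (auto simp: M_def B_def indicator_def elim!: eventually_mono)
      show "AE x in \<pi>. 0 \<le> M + (B - M) * indicator {m<..} x"
        using False by (auto simp: M_def B_def indicator_def)
    qed
    also have "\<dots> = M + (B - M) * measure \<pi> {m<..}"
      by (subst Bochner_Integration.integral_add) (use prob_space in \<open>auto simp: integrable_indicator_iff less_top[symmetric]\<close>)
    also have "\<dots> \<le> M + (B - M) * \<epsilon>"
      using False pm by (intro add_left_mono mult_left_mono) auto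
    finally show ?thesis by (simp add: M_def B_def algebra_simps)
  qed
qed

theorem corollary3:
  fixes \<pi> :: "real measure" and l \<alpha> \<epsilon> :: real and N :: nat
  assumes "prob_space \<pi>"
    and "sets \<pi> = sets borel"
    and "measure \<pi> {x. x \<le> l} = 1"
    and "0 < \<alpha>" and "\<alpha> \<le> 1"
    and "0 \<le> \<epsilon>" and "\<epsilon> \<le> 1"
  shows "measure (PiM {..<N} (\<lambda>_. \<pi>))
           {xs \<in> space (PiM {..<N} (\<lambda>_. \<pi>)).
              CVaR \<alpha> \<pi> \<le> (INF p \<in> (UNIV::real set) \<times> {0<..}.
                 ereal (zeta_star \<alpha> N xs (fst p) (snd p) * (1 - \<epsilon>)
                        + Lfun \<alpha> l (fst p) (snd p) * \<epsilon>))}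
         \<ge> 1 - (1 - \<epsilon>) ^ N"
proof -
  interpret P: real_distribution \<pi> using assms(1,2) by (simp add: real_distribution_def real_distribution_axioms_def)
  have rd: "real_distribution \<pi>" by unfold_locales
  let ?P = "PiM {..<N} (\<lambda>_. \<pi>)"
  interpret PP: product_prob_space "\<lambda>_. \<pi>" "{..<N}" by unfold_locales
  interpret Q: prob_space ?P by (rule prob_space_PiM) (rule assms(1))
  let ?T = "{xs \<in> space ?P.
              CVaR \<alpha> \<pi> \<le> (INF p \<in> (UNIV::real set) \<times> {0<..}.
                 ereal (zeta_star \<alpha> N xs (fst p) (snd p) * (1 - \<epsilon>)
                        + Lfun \<alpha> l (fst p) (snd p) * \<epsilon>))}"
  have AEl: "AE x in \<pi>. x \<le> l"
    using P.AE_prob_1[OF assms(3)] by simp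
  show ?thesis
  proof (cases "N = 0 \<or> \<epsilon> = 0")
    case True
    then show ?thesis by auto
  next
    case False
    then have N0: "N > 0" and e0: "\<epsilon> > 0" using assms by auto
    define \<Phi> where "\<Phi> m = (INF p \<in> (UNIV::real set) \<times> {0<..}.
                 ereal (Lfun \<alpha> m (fst p) (snd p) * (1 - \<epsilon>) + Lfun \<alpha> l (fst p) (snd p) * \<epsilon>))" for m
    define h where "h m = (CVaR \<alpha> \<pi> \<le> \<Phi> m)" for m
    have T_eq: "?T = {xs \<in> space ?P. h (Max (xs ` {..<N}))}"
    proof -
      have "(INF p \<in> (UNIV::real set) \<times> {0<..}.
                 ereal (zeta_star \<alpha> N xs (fst p) (snd p) * (1 - \<epsilon>)
                        + Lfun \<alpha> l (fst p) (snd p) * \<epsilon>)) = \<Phi> (Max (xs ` {..<N}))" for xs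
        unfolding \<Phi>_def using N0 assms(4) by (intro INF_cong) (auto simp: zeta_Max)
      then show ?thesis unfolding h_def by simp
    qed
    have hmono: "h m \<Longrightarrow> m \<le> m' \<Longrightarrow> h m'" for m m'
    proof -
      assume "h m" "m \<le> m'"
      have "\<Phi> m \<le> \<Phi> m'" unfolding \<Phi>_def
      proof (intro INF_mono)
        fix p :: "real \<times> real" assume p: "p \<in> UNIV \<times> {0<..}"
        have "Lfun \<alpha> m (fst p) (snd p) \<le> Lfun \<alpha> m' (fst p) (snd p)"
          using p \<open>m \<le> m'\<close> assms by (intro Lfun_mono) auto
        then have "Lfun \<alpha> m (fst p) (snd p) * (1 - \<epsilon>) \<le> Lfun \<alpha> m' (fst p) (snd p) * (1 - \<epsilon>)"
          using assms by (intro mult_right_mono) auto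
        then show "\<exists>n\<in>UNIV \<times> {0<..}. ereal (Lfun \<alpha> m (fst n) (snd n) * (1 - \<epsilon>) + Lfun \<alpha> l (fst n) (snd n) * \<epsilon>)
            \<le> ereal (Lfun \<alpha> m' (fst p) (snd p) * (1 - \<epsilon>) + Lfun \<alpha> l (fst p) (snd p) * \<epsilon>)"
          using p by (intro bexI[of _ p]) auto
      qed
      with \<open>h m\<close> show "h m'" unfolding h_def by simp
    qed
    define f where "f m = (if h m then 1 else 0::real)" for m
    have "mono f" unfolding f_def by (rule monoI) (auto dest: hmono)
    then have fm[measurable]: "f \<in> borel_measurable borel" by (rule borel_measurable_mono)
    have "?T = {xs \<in> space ?P. f (Max ((\<lambda>k. xs k) ` {..<N})) = 1}"
      unfolding T_eq f_def by auto
    also have "\<dots> \<in> sets ?P" by measurable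
    finally have Tm: "?T \<in> sets ?P" .
    have key: "h m" if "measure \<pi> {m<..} \<le> \<epsilon>" for m
      unfolding h_def \<Phi>_def
    proof (rule INF_greatest)
      fix p :: "real \<times> real" assume "p \<in> UNIV \<times> {0<..}"
      then obtain \<mu> t where p: "p = (\<mu>, t)" "t > 0" by auto
      define z where "z = t * \<mu>"
      have "CVaR \<alpha> \<pi> \<le> ereal (z + (\<integral>x. max (x - z) 0 \<partial>\<pi>) / \<alpha>)"
        unfolding CVaR_def by (rule INF_lower) simp
      also have "\<dots> \<le> ereal (Lfun \<alpha> m \<mu> t * (1 - \<epsilon>) + Lfun \<alpha> l \<mu> t * \<epsilon>)"
      proof -
        have I: "(\<integral>x. max (x - z) 0 \<partial>\<pi>) \<le> (1-\<epsilon>) * max (m - z) 0 + \<epsilon> * max (l - z) 0"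
          by (rule int_bound[OF rd AEl that]) (use assms in auto)
        have "z + (\<integral>x. max (x - z) 0 \<partial>\<pi>) / \<alpha> \<le> z + ((1-\<epsilon>) * max (m - z) 0 + \<epsilon> * max (l - z) 0) / \<alpha>"
          using I assms(4) by (simp add: divide_right_mono)
        also have "\<dots> = Lfun \<alpha> m \<mu> t * (1 - \<epsilon>) + Lfun \<alpha> l \<mu> t * \<epsilon>"
          using p assms(4) by (simp add: Lfun_alt z_def field_simps)
        finally show ?thesis by simp
      qed
      finally show "CVaR \<alpha> \<pi> \<le> ereal (Lfun \<alpha> m (fst p) (snd p) * (1 - \<epsilon>) + Lfun \<alpha> l (fst p) (snd p) * \<epsilon>)"
        using p by simp
    qed
    show ?thesis
    proof (cases "\<epsilon> = 1")
      case True
      have "?T = space ?P" unfolding T_eq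
        using key True by (auto simp: P.prob_le_1)
      then have "measure ?P ?T = measure ?P (space ?P)" by (rule arg_cong)
      also have "\<dots> = 1" using prob_space.prob_space[OF prob_space_PiM[OF assms(1)]] .
      finally show ?thesis using True N0 by simp
    next
      case False
      then have e1: "\<epsilon> < 1" using assms by simp
      interpret C: cdf_distribution \<pi> by unfold_locales
      define v where "v = C.I (1 - \<epsilon>)"
      have pinv: "1 - \<epsilon> \<le> cdf \<pi> x \<longleftrightarrow> v \<le> x" for x
        unfolding v_def using e0 e1 by (intro C.pseudoinverse) auto
      have pv: "measure \<pi> {v<..} \<le> \<epsilon>"
      proof -
        have "measure \<pi> {v<..} = 1 - measure \<pi> {..v}"
          using P.prob_compl[of "{..v}"] by (simp add: Compl_eq_Diff_UNIV[symmetric] Compl_atMost)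
        then show ?thesis using pinv[of v] by (simp add: cdf_def)
      qed
      have plt: "measure \<pi> {..<v} \<le> 1 - \<epsilon>"
      proof (rule tendsto_upperbound[OF P.cdf_at_left])
        show "\<forall>\<^sub>F x in at_left v. cdf \<pi> x \<le> 1 - \<epsilon>"
          unfolding eventually_at_left_field using pinv
          by (intro exI[of _ "v - 1"]) (auto, metis less_imp_le linorder_not_le)
      qed simp
      define G where "G = {xs \<in> space ?P. \<exists>k<N. v \<le> xs k}"
      have GT: "G \<subseteq> ?T"
      proof
        fix xs assume "xs \<in> G"
        then obtain k where k: "xs \<in> space ?P" "k < N" "v \<le> xs k" unfolding G_def by auto
        have "xs k \<le> Max (xs ` {..<N})" using k by (intro Max_ge) auto
        then have "measure \<pi> {Max (xs ` {..<N})<..} \<le> measure \<pi> {v<..}"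
          using k by (intro P.finite_measure_mono) (auto intro: order.trans)
        then have "h (Max (xs ` {..<N}))" using pv by (intro key) simp
        then show "xs \<in> ?T" using k unfolding T_eq by simp
      qed
      have cG: "space ?P - G = {xs \<in> space ?P. \<forall>k\<in>{..<N}. xs k \<in> {..<v}}"
        unfolding G_def by (auto simp: not_le[symmetric])
      have "measure ?P (space ?P - G) = measure \<pi> {..<v} ^ N"
        unfolding cG using PP.emeasure_PiM_Collect[of "{..<N}" "\<lambda>_. {..<v}"]
        by (simp add: PP.emeasure_eq_measure P.emeasure_eq_measure prod_ennreal)
           (subst (asm) ennreal_power, simp, subst (asm) ennreal_inj, auto)
      also have "\<dots> \<le> (1 - \<epsilon>) ^ N" using plt by (intro power_mono) auto
      finally have "measure ?P (space ?P - G) \<le> (1 - \<epsilon>) ^ N" .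
      moreover have Gm: "G \<in> sets ?P" unfolding G_def by measurable
      ultimately have "1 - (1 - \<epsilon>) ^ N \<le> measure ?P G" using PP.prob_compl[OF Gm] by simp
      also have "\<dots> \<le> measure ?P ?T" using GT Tm by (rule PP.finite_measure_mono)
      finally show ?thesis .
    qed
  qed
qed

end
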